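(* Let $p>0$ and let $(u_n)_{n\ge0}$ be a sequence in $E^1$ with partial sums $s_n=\sum_{k=0}^n u_k$. If the series $\sum u_n$ converges to $\nu\in E^1$ (i.e. $D(s_n,\nu)\to0$), then $\sum u_n$ is $E_p$ summable to $\nu$, i.e. $D\big(\frac{1}{(p+1)^n}\sum_{k=0}^n\binom{n}{k}p^{n-k}s_k,\nu\big)\to0$.
   Context: $E^1$ denotes the set of fuzzy numbers: functions $u:\mathbb{R}\to[0,1]$ that are normal, fuzzy convex, upper semicontinuous, and have compact support $\overline{\{t:u(t)>0\}}$. For $\alpha\in(0,1]$ the $\alpha$-level set is $[u]_\alpha=\{t:u(t)\ge\alpha\}$ and $[u]_0=\overline{\{t:u(t)>0\}}$; each is a compact interval $[u^-_\alpha,u^+_\alpha]$. Addition and scalar multiplication are defined levelwise: $[u+v]_\alpha=[u^-_\alpha+v^-_\alpha,u^+_\alpha+v^+_\alpha]$ and $[ku]_\alpha=k[u]_\alpha$ for $k\in\mathbb{R}$. The metric is $D(u,v)=\sup_{\alpha\in[0,1]}\max\{|u^-_\alpha-v^-_\alpha|,|u^+_\alpha-v^+_\alpha|\}$. A series $\sum u_n$ of fuzzy numbers is $E_p$ summable to $\nu$ if its sequence of partial sums $(s_n)$ has Euler means $\frac{1}{(p+1)^n}\sum_{k=0}^n\binom{n}{k}p^{n-k}s_k$ converging to $\nu$ in $D$. *)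

theory Defs
  imports "HOL-Analysis.Analysis"
begin

definition fuzzy_number :: "(real \<Rightarrow> real) \<Rightarrow> bool" where
  "fuzzy_number u \<longleftrightarrow>
     (\<forall>t. 0 \<le> u t \<and> u t \<le> 1) \<and>
     (\<exists>t. u t = 1) \<and>
     (\<forall>x y l. 0 \<le> l \<and> l \<le> 1 \<longrightarrow> u (l * x + (1 - l) * y) \<ge> min (u x) (u y)) \<and>
     (\<forall>x e. e > 0 \<longrightarrow> (\<exists>d>0. \<forall>y. \<bar>y - x\<bar> < d \<longrightarrow> u y < u x + e)) \<and>
     compact (closure {t. u t > 0})"

definition level :: "(real \<Rightarrow> real) \<Rightarrow> real \<Rightarrow> real set" where
  "level u a = (if a = 0 then closure {t. u t > 0} else {t. u t \<ge> a})"

definition lower :: "(real \<Rightarrow> real) \<Rightarrow> real \<Rightarrow> real" where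
  "lower u a = Inf (level u a)"

definition upper :: "(real \<Rightarrow> real) \<Rightarrow> real \<Rightarrow> real" where
  "upper u a = Sup (level u a)"

text \<open>The membership function of the fuzzy number whose \<open>\<alpha>\<close>-levels are \<open>[L \<alpha>, R \<alpha>]\<close>.\<close>
definition fuzzy_of_levels :: "(real \<Rightarrow> real) \<Rightarrow> (real \<Rightarrow> real) \<Rightarrow> real \<Rightarrow> real" where
  "fuzzy_of_levels L R t = Sup ({0} \<union> {a. 0 < a \<and> a \<le> 1 \<and> L a \<le> t \<and> t \<le> R a})"

definition fadd :: "(real \<Rightarrow> real) \<Rightarrow> (real \<Rightarrow> real) \<Rightarrow> real \<Rightarrow> real" where
  "fadd u v = fuzzy_of_levels (\<lambda>a. lower u a + lower v a) (\<lambda>a. upper u a + upper v a)"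

definition fscale :: "real \<Rightarrow> (real \<Rightarrow> real) \<Rightarrow> real \<Rightarrow> real" where
  "fscale k u = fuzzy_of_levels (\<lambda>a. min (k * lower u a) (k * upper u a))
                                (\<lambda>a. max (k * lower u a) (k * upper u a))"

primrec fsum :: "(nat \<Rightarrow> real \<Rightarrow> real) \<Rightarrow> nat \<Rightarrow> real \<Rightarrow> real" where
  "fsum f 0 = f 0"
| "fsum f (Suc n) = fadd (fsum f n) (f (Suc n))"

definition fdist :: "(real \<Rightarrow> real) \<Rightarrow> (real \<Rightarrow> real) \<Rightarrow> real" where
  "fdist u v = (SUP a\<in>{0..1}. max \<bar>lower u a - lower v a\<bar> \<bar>upper u a - upper v a\<bar>)"

definition euler_mean :: "real \<Rightarrow> (nat \<Rightarrow> real \<Rightarrow> real) \<Rightarrow> nat \<Rightarrow> real \<Rightarrow> real" where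
  "euler_mean p u n = fscale (1 / (p + 1) ^ n)
     (fsum (\<lambda>k. fscale (real (n choose k) * p ^ (n - k)) (fsum u k)) n)"

end

theory Submission
  imports Defs "HOL-Real_Asymp.Real_Asymp"
begin

definition good :: "(real\<Rightarrow>real) \<Rightarrow> (real\<Rightarrow>real) \<Rightarrow> bool" where
"good L R \<longleftrightarrow> (\<forall>a b. 0 \<le> a \<longrightarrow> a \<le> b \<longrightarrow> b \<le> 1 \<longrightarrow> L a \<le> L b \<and> R b \<le> R a) \<and> L 1 \<le> R 1 \<and>
  (\<forall>a t. 0 < a \<longrightarrow> a \<le> 1 \<longrightarrow> (\<forall>b. 0<b \<longrightarrow> b<a \<longrightarrow> L b \<le> t) \<longrightarrow> L a \<le> t) \<and>
  (\<forall>a t. 0 < a \<longrightarrow> a \<le> 1 \<longrightarrow> (\<forall>b. 0<b \<longrightarrow> b<a \<longrightarrow> t \<le> R b) \<longrightarrow> t \<le> R a) \<and>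
  (\<forall>t. (\<forall>b. 0<b \<longrightarrow> b\<le>1 \<longrightarrow> t \<le> L b) \<longrightarrow> t \<le> L 0) \<and>
  (\<forall>t. (\<forall>b. 0<b \<longrightarrow> b\<le>1 \<longrightarrow> R b \<le> t) \<longrightarrow> R 0 \<le> t)"

lemma good_LR:
  assumes "good L R" "0 \<le> a" "a \<le> 1"
  shows "L 0 \<le> L a \<and> L a \<le> R a \<and> R a \<le> R 0"
proof -
  have m: "\<And>a b. 0 \<le> a \<Longrightarrow> a \<le> b \<Longrightarrow> b \<le> 1 \<Longrightarrow> L a \<le> L b \<and> R b \<le> R a"
    and "L 1 \<le> R 1" using assms(1) unfolding good_def by blast+
  then show ?thesis using m[of 0 a] m[of a 1] assms(2,3) by linarith
qed

lemma fol_levels: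
  assumes g: "good L R" and a: "0 < a" "a \<le> 1"
  shows "{t. a \<le> fuzzy_of_levels L R t} = {L a..R a}"
proof -
  have m: "\<And>a b. 0 \<le> a \<Longrightarrow> a \<le> b \<Longrightarrow> b \<le> 1 \<Longrightarrow> L a \<le> L b \<and> R b \<le> R a"
    and lc: "\<And>a t. 0 < a \<Longrightarrow> a \<le> 1 \<Longrightarrow> (\<And>b. 0<b \<Longrightarrow> b<a \<Longrightarrow> L b \<le> t) \<Longrightarrow> L a \<le> t"
    and rc: "\<And>a t. 0 < a \<Longrightarrow> a \<le> 1 \<Longrightarrow> (\<And>b. 0<b \<Longrightarrow> b<a \<Longrightarrow> t \<le> R b) \<Longrightarrow> t \<le> R a"
    using g unfolding good_def by blast+
  define S where "S t = {0} \<union> {a. 0 < a \<and> a \<le> 1 \<and> L a \<le> t \<and> t \<le> R a}" for t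
  have w: "fuzzy_of_levels L R t = Sup (S t)" for t unfolding S_def fuzzy_of_levels_def by simp
  have bdd: "bdd_above (S t)" for t unfolding S_def by (auto intro!: bdd_aboveI[of _ 1])
  show ?thesis
  proof (intro set_eqI iffI)
    fix t assume "t \<in> {L a..R a}"
    then have "a \<in> S t" using a unfolding S_def by auto
    then show "t \<in> {t. a \<le> fuzzy_of_levels L R t}" using cSup_upper[OF _ bdd] w by auto
  next
    fix t assume "t \<in> {t. a \<le> fuzzy_of_levels L R t}"
    then have ta: "a \<le> Sup (S t)" using w by auto
    have "L a \<le> t"
    proof (rule ccontr)
      assume "\<not> L a \<le> t"
      then obtain b where b: "0 < b" "b < a" "\<not> L b \<le> t" using lc[OF a] by blast
      have "Sup (S t) \<le> b"
      proof (rule cSup_least)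
        show "S t \<noteq> {}" unfolding S_def by auto
        fix c assume "c \<in> S t"
        then show "c \<le> b" unfolding S_def using m[of b c] b by (cases "b \<le> c") auto
      qed
      then show False using ta b by linarith
    qed
    moreover have "t \<le> R a"
    proof (rule ccontr)
      assume "\<not> t \<le> R a"
      then obtain b where b: "0 < b" "b < a" "\<not> t \<le> R b" using rc[OF a] by blast
      have "Sup (S t) \<le> b"
      proof (rule cSup_least)
        show "S t \<noteq> {}" unfolding S_def by auto
        fix c assume "c \<in> S t"
        then show "c \<le> b" unfolding S_def using m[of b c] b by (cases "b \<le> c") auto
      qed
      then show False using ta b by linarith
    qed
    ultimately show "t \<in> {L a..R a}" by auto
  qed
qed

lemma fol_pos:
  "{t. 0 < fuzzy_of_levels L R t} = {t. \<exists>a. 0 < a \<and> a \<le> 1 \<and> L a \<le> t \<and> t \<le> R a}"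
proof -
  define S where "S t = {0} \<union> {a. 0 < a \<and> a \<le> 1 \<and> L a \<le> t \<and> t \<le> R a}" for t
  have w: "fuzzy_of_levels L R t = Sup (S t)" for t unfolding S_def fuzzy_of_levels_def by simp
  have bdd: "bdd_above (S t)" for t unfolding S_def by (auto intro!: bdd_aboveI[of _ 1])
  show ?thesis
  proof (intro set_eqI iffI)
    fix t assume "t \<in> {t. 0 < fuzzy_of_levels L R t}"
    then have "0 < Sup (S t)" using w by auto
    moreover have "S t \<noteq> {}" unfolding S_def by auto
    ultimately obtain c where "c \<in> S t" "0 < c" using less_cSup_iff[OF _ bdd] by blast
    then show "t \<in> {t. \<exists>a. 0 < a \<and> a \<le> 1 \<and> L a \<le> t \<and> t \<le> R a}" unfolding S_def by auto
  next
    fix t assume "t \<in> {t. \<exists>a. 0 < a \<and> a \<le> 1 \<and> L a \<le> t \<and> t \<le> R a}"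
    then obtain c where "c \<in> S t" "0 < c" unfolding S_def by auto
    then show "t \<in> {t. 0 < fuzzy_of_levels L R t}" using cSup_upper[OF _ bdd] w by force
  qed
qed

lemma fol_lower_upper:
  assumes g: "good L R" and a: "0 \<le> a" "a \<le> 1"
  shows "lower (fuzzy_of_levels L R) a = L a \<and> upper (fuzzy_of_levels L R) a = R a"
proof (cases "a = 0")
  case False
  then have "level (fuzzy_of_levels L R) a = {L a..R a}"
    using fol_levels[OF g] a unfolding level_def by auto
  then show ?thesis using good_LR[OF g a] unfolding lower_def upper_def by simp
next
  case True
  have lc0: "\<And>t. (\<And>b. 0<b \<Longrightarrow> b\<le>1 \<Longrightarrow> t \<le> L b) \<Longrightarrow> t \<le> L 0"
    and rc0: "\<And>t. (\<And>b. 0<b \<Longrightarrow> b\<le>1 \<Longrightarrow> R b \<le> t) \<Longrightarrow> R 0 \<le> t"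
    using g unfolding good_def by blast+
  define U where "U = {t. \<exists>a. 0 < a \<and> a \<le> 1 \<and> L a \<le> t \<and> t \<le> R a}"
  have lev: "level (fuzzy_of_levels L R) a = closure U"
    using True fol_pos unfolding level_def U_def by simp
  have UL: "L b \<in> U" "R b \<in> U" if "0 < b" "b \<le> 1" for b
    using that good_LR[OF g, of b] unfolding U_def by auto
  have Usub: "U \<subseteq> {L 0..R 0}"
  proof
    fix t assume "t \<in> U"
    then obtain b where "0 < b" "b \<le> 1" "L b \<le> t" "t \<le> R b" unfolding U_def by auto
    then show "t \<in> {L 0..R 0}" using good_LR[OF g, of b] by auto
  qed
  have csub: "closure U \<subseteq> {L 0..R 0}" by (rule closure_minimal[OF Usub]) auto
  have ne: "closure U \<noteq> {}" using UL(1)[of 1] closure_subset by auto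
  have bb: "bdd_below (closure U)" "bdd_above (closure U)"
    using bdd_below_mono[OF _ csub] bdd_above_mono[OF _ csub] by auto
  have "Inf (closure U) = L 0"
  proof (rule antisym)
    show "Inf (closure U) \<le> L 0"
      by (rule lc0) (use UL closure_subset bb in \<open>auto intro!: cInf_lower\<close>)
    show "L 0 \<le> Inf (closure U)" using csub ne by (auto intro!: cInf_greatest)
  qed
  moreover have "Sup (closure U) = R 0"
  proof (rule antisym)
    show "R 0 \<le> Sup (closure U)"
      by (rule rc0) (use UL closure_subset bb in \<open>auto intro!: cSup_upper\<close>)
    show "Sup (closure U) \<le> R 0" using csub ne by (auto intro!: cSup_least)
  qed
  ultimately show ?thesis using lev True unfolding lower_def upper_def by simp
qed

lemma fuzzy_good:
  assumes fz: "fuzzy_number u"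
  shows "good (lower u) (upper u)"
proof -
  have r01: "\<And>t. 0 \<le> u t \<and> u t \<le> 1" and ex1: "\<exists>t. u t = 1"
    and cv: "\<And>x y l. 0 \<le> l \<Longrightarrow> l \<le> 1 \<Longrightarrow> u (l * x + (1 - l) * y) \<ge> min (u x) (u y)"
    and usc: "\<And>x e. e > 0 \<Longrightarrow> (\<exists>d>0. \<forall>y. \<bar>y - x\<bar> < d \<longrightarrow> u y < u x + e)"
    and cp: "compact (closure {t. u t > 0})"
    using fz unfolding fuzzy_number_def by blast+
  obtain t0 where t0: "u t0 = 1" using ex1 by blast
  have sub0: "level u a \<subseteq> level u 0" if "0 \<le> a" "a \<le> 1" for a
  proof (cases "a = 0")
    case False
    then have "level u a \<subseteq> {t. u t > 0}" using that unfolding level_def by auto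
    then show ?thesis using closure_subset[of "{t. u t > 0}"] False unfolding level_def by auto
  qed simp
  have bd0: "bounded (level u 0)" unfolding level_def using compact_imp_bounded[OF cp] by (simp del: bounded_closure)
  have bdb: "bdd_below (level u a)" "bdd_above (level u a)" if "0 \<le> a" "a \<le> 1" for a
    using bounded_subset[OF bd0 sub0[OF that]] bounded_imp_bdd_above bounded_imp_bdd_below by auto
  have t0l: "t0 \<in> level u a" if "0 \<le> a" "a \<le> 1" for a
  proof (cases "a = 0")
    case True
    then show ?thesis unfolding level_def using closure_subset[of "{t. u t > 0}"] t0 by auto
  qed (use that t0 in \<open>auto simp: level_def\<close>)
  have ne: "level u a \<noteq> {}" if "0 \<le> a" "a \<le> 1" for a using t0l[OF that] by auto
  have cl: "closed (level u a)" if "0 < a" for a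
  proof -
    have "open {t. u t < a}"
      unfolding open_dist
    proof (intro ballI)
      fix x assume "x \<in> {t. u t < a}"
      then have "a - u x > 0" by simp
      from usc[OF this] obtain d where "d > 0" "\<forall>y. \<bar>y - x\<bar> < d \<longrightarrow> u y < u x + (a - u x)" by blast
      then show "\<exists>e>0. \<forall>y. dist y x < e \<longrightarrow> y \<in> {t. u t < a}" by (auto simp: dist_real_def)
    qed
    moreover have "level u a = - {t. u t < a}" using that unfolding level_def by auto
    ultimately show ?thesis by (simp add: closed_def)
  qed
  have ivl: "level u a = {lower u a..upper u a}" if a: "0 < a" "a \<le> 1" for a
  proof -
    have a0: "0 \<le> a" using a by simp
    have lo: "lower u a \<in> level u a" unfolding lower_def
      by (rule closed_contains_Inf[OF ne[OF a0 a(2)] bdb(1)[OF a0 a(2)] cl[OF a(1)]])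
    have hi: "upper u a \<in> level u a" unfolding upper_def
      by (rule closed_contains_Sup[OF ne[OF a0 a(2)] bdb(2)[OF a0 a(2)] cl[OF a(1)]])
    show ?thesis
    proof (intro set_eqI iffI)
      fix t assume "t \<in> level u a"
      then show "t \<in> {lower u a..upper u a}" unfolding lower_def upper_def
        using cInf_lower[OF _ bdb(1)[OF a0 a(2)]] cSup_upper[OF _ bdb(2)[OF a0 a(2)]] by auto
    next
      fix t assume t: "t \<in> {lower u a..upper u a}"
      show "t \<in> level u a"
      proof (cases "lower u a = upper u a")
        case True then show ?thesis using t lo by auto
      next
        case False
        define lo' hi' where "lo' = lower u a" and "hi' = upper u a"
        have lt: "lo' < hi'" using False t unfolding lo'_def hi'_def by auto
        define l where "l = (hi' - t) / (hi' - lo')"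
        have l01: "0 \<le> l" "l \<le> 1" using t lt unfolding l_def lo'_def hi'_def by (auto simp: field_simps)
        have e1: "l * (hi' - lo') = hi' - t" using lt unfolding l_def by simp
        have "l * lo' + (1 - l) * hi' = hi' - l * (hi' - lo')" by (simp add: algebra_simps)
        then have "l * lo' + (1 - l) * hi' = t" using e1 by simp
        then have "u t \<ge> min (u lo') (u hi')" using cv[OF l01, of lo' hi'] by simp
        moreover have "u lo' \<ge> a" "u hi' \<ge> a" using lo hi a unfolding lo'_def hi'_def level_def by auto
        ultimately show ?thesis using a unfolding level_def by auto
      qed
    qed
  qed
  have mono: "lower u a \<le> lower u b \<and> upper u b \<le> upper u a" if "0 \<le> a" "a \<le> b" "b \<le> 1" for a b
  proof -
    have "level u b \<subseteq> level u a"
    proof (cases "a = 0")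
      case True then show ?thesis using sub0 that by auto
    next
      case False then show ?thesis using that unfolding level_def by auto
    qed
    then show ?thesis unfolding lower_def upper_def
      using cInf_superset_mono[OF ne bdb(1)] cSup_subset_mono[OF ne bdb(2)] that by auto
  qed
  have l1: "lower u 1 \<le> upper u 1" unfolding lower_def upper_def
    using cInf_le_cSup[OF ne[of 1] bdb(2)[of 1] bdb(1)[of 1]] by simp
  have lc: "lower u a \<le> t" if a: "0 < a" "a \<le> 1" and h: "\<And>b. 0<b \<Longrightarrow> b<a \<Longrightarrow> lower u b \<le> t" for a t
  proof (cases "upper u a \<le> t")
    case True then show ?thesis using ivl[OF a] ne[of a] a by fastforce
  next
    case False
    have ge: "u t \<ge> b" if "0 < b" "b < a" for b
    proof -
      have "t \<in> {lower u b..upper u b}" using h[OF that] mono[of b a] that a False by auto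
      then show ?thesis using ivl[of b] that a unfolding level_def by auto
    qed
    have "u t \<ge> a"
    proof (rule ccontr)
      assume "\<not> a \<le> u t"
      then show False using ge[of "(u t + a)/2"] a r01[of t] by auto
    qed
    then have "t \<in> level u a" using a unfolding level_def by auto
    then show ?thesis using ivl[OF a] by auto
  qed
  have rc: "t \<le> upper u a" if a: "0 < a" "a \<le> 1" and h: "\<And>b. 0<b \<Longrightarrow> b<a \<Longrightarrow> t \<le> upper u b" for a t
  proof (cases "t \<le> lower u a")
    case True then show ?thesis using ivl[OF a] ne[of a] a by fastforce
  next
    case False
    have ge: "u t \<ge> b" if "0 < b" "b < a" for b
    proof -
      have "t \<in> {lower u b..upper u b}" using h[OF that] mono[of b a] that a False by auto
      then show ?thesis using ivl[of b] that a unfolding level_def by auto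
    qed
    have "u t \<ge> a"
    proof (rule ccontr)
      assume "\<not> a \<le> u t"
      then show False using ge[of "(u t + a)/2"] a r01[of t] by auto
    qed
    then have "t \<in> level u a" using a unfolding level_def by auto
    then show ?thesis using ivl[OF a] by auto
  qed
  have pos: "x \<in> {lower u (u x)..upper u (u x)}" if "u x > 0" for x
    using ivl[of "u x"] that r01[of x] unfolding level_def by auto
  have lc0: "t \<le> lower u 0" if h: "\<And>b. 0<b \<Longrightarrow> b\<le>1 \<Longrightarrow> t \<le> lower u b" for t
  proof -
    have "{x. u x > 0} \<subseteq> {t..}" using pos h r01 by fastforce
    then have "closure {x. u x > 0} \<subseteq> {t..}" by (rule closure_minimal) auto
    then show ?thesis using ne[of 0] unfolding lower_def level_def by (auto intro!: cInf_greatest)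
  qed
  have rc0: "upper u 0 \<le> t" if h: "\<And>b. 0<b \<Longrightarrow> b\<le>1 \<Longrightarrow> upper u b \<le> t" for t
  proof -
    have "{x. u x > 0} \<subseteq> {..t}" using pos h r01 by fastforce
    then have "closure {x. u x > 0} \<subseteq> {..t}" by (rule closure_minimal) auto
    then show ?thesis using ne[of 0] unfolding upper_def level_def by (auto intro!: cSup_least)
  qed
  show ?thesis unfolding good_def using mono l1 lc rc lc0 rc0 by blast
qed

lemma good_cong:
  assumes "good L R" "\<And>a. 0 \<le> a \<Longrightarrow> a \<le> 1 \<Longrightarrow> L' a = L a \<and> R' a = R a"
  shows "good L' R'"
proof -
  have e: "\<And>a. 0 \<le> a \<Longrightarrow> a \<le> 1 \<Longrightarrow> L' a = L a" "\<And>a. 0 \<le> a \<Longrightarrow> a \<le> 1 \<Longrightarrow> R' a = R a"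
    using assms(2) by auto
  have m: "\<And>a b. 0 \<le> a \<Longrightarrow> a \<le> b \<Longrightarrow> b \<le> 1 \<Longrightarrow> L a \<le> L b \<and> R b \<le> R a"
    and o: "L 1 \<le> R 1"
    and lc: "\<And>a t. 0 < a \<Longrightarrow> a \<le> 1 \<Longrightarrow> (\<And>b. 0<b \<Longrightarrow> b<a \<Longrightarrow> L b \<le> t) \<Longrightarrow> L a \<le> t"
    and rc: "\<And>a t. 0 < a \<Longrightarrow> a \<le> 1 \<Longrightarrow> (\<And>b. 0<b \<Longrightarrow> b<a \<Longrightarrow> t \<le> R b) \<Longrightarrow> t \<le> R a"
    and lc0: "\<And>t. (\<And>b. 0<b \<Longrightarrow> b\<le>1 \<Longrightarrow> t \<le> L b) \<Longrightarrow> t \<le> L 0"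
    and rc0: "\<And>t. (\<And>b. 0<b \<Longrightarrow> b\<le>1 \<Longrightarrow> R b \<le> t) \<Longrightarrow> R 0 \<le> t"
    using assms(1) unfolding good_def by blast+
  show ?thesis unfolding good_def
  proof (intro conjI allI impI)
    fix a b :: real assume "0 \<le> a" "a \<le> b" "b \<le> 1"
    then show "L' a \<le> L' b" "R' b \<le> R' a" using m[of a b] e[of a] e[of b] by auto
  next
    show "L' 1 \<le> R' 1" using o e[of 1] by auto
  next
    fix a t :: real assume a: "0 < a" "a \<le> 1" and h: "\<forall>b. 0 < b \<longrightarrow> b < a \<longrightarrow> L' b \<le> t"
    show "L' a \<le> t" using lc[OF a, of t] h e a by auto
  next
    fix a t :: real assume a: "0 < a" "a \<le> 1" and h: "\<forall>b. 0 < b \<longrightarrow> b < a \<longrightarrow> t \<le> R' b"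
    show "t \<le> R' a" using rc[OF a, of t] h e a by auto
  next
    fix t :: real assume h: "\<forall>b. 0 < b \<longrightarrow> b \<le> 1 \<longrightarrow> t \<le> L' b"
    show "t \<le> L' 0" using lc0[of t] h e by auto
  next
    fix t :: real assume h: "\<forall>b. 0 < b \<longrightarrow> b \<le> 1 \<longrightarrow> R' b \<le> t"
    show "R' 0 \<le> t" using rc0[of t] h e by auto
  qed
qed

lemma good_add:
  assumes g1: "good L1 R1" and g2: "good L2 R2"
  shows "good (\<lambda>a. L1 a + L2 a) (\<lambda>a. R1 a + R2 a)"
proof -
  have m1: "\<And>a b. 0 \<le> a \<Longrightarrow> a \<le> b \<Longrightarrow> b \<le> 1 \<Longrightarrow> L1 a \<le> L1 b \<and> R1 b \<le> R1 a"
    and o1: "L1 1 \<le> R1 1"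
    and lc1: "\<And>a t. 0 < a \<Longrightarrow> a \<le> 1 \<Longrightarrow> (\<And>b. 0<b \<Longrightarrow> b<a \<Longrightarrow> L1 b \<le> t) \<Longrightarrow> L1 a \<le> t"
    and rc1: "\<And>a t. 0 < a \<Longrightarrow> a \<le> 1 \<Longrightarrow> (\<And>b. 0<b \<Longrightarrow> b<a \<Longrightarrow> t \<le> R1 b) \<Longrightarrow> t \<le> R1 a"
    and lc01: "\<And>t. (\<And>b. 0<b \<Longrightarrow> b\<le>1 \<Longrightarrow> t \<le> L1 b) \<Longrightarrow> t \<le> L1 0"
    and rc01: "\<And>t. (\<And>b. 0<b \<Longrightarrow> b\<le>1 \<Longrightarrow> R1 b \<le> t) \<Longrightarrow> R1 0 \<le> t"
    using g1 unfolding good_def by blast+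
  have m2: "\<And>a b. 0 \<le> a \<Longrightarrow> a \<le> b \<Longrightarrow> b \<le> 1 \<Longrightarrow> L2 a \<le> L2 b \<and> R2 b \<le> R2 a"
    and o2: "L2 1 \<le> R2 1"
    and lc2: "\<And>a t. 0 < a \<Longrightarrow> a \<le> 1 \<Longrightarrow> (\<And>b. 0<b \<Longrightarrow> b<a \<Longrightarrow> L2 b \<le> t) \<Longrightarrow> L2 a \<le> t"
    and rc2: "\<And>a t. 0 < a \<Longrightarrow> a \<le> 1 \<Longrightarrow> (\<And>b. 0<b \<Longrightarrow> b<a \<Longrightarrow> t \<le> R2 b) \<Longrightarrow> t \<le> R2 a"
    and lc02: "\<And>t. (\<And>b. 0<b \<Longrightarrow> b\<le>1 \<Longrightarrow> t \<le> L2 b) \<Longrightarrow> t \<le> L2 0"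
    and rc02: "\<And>t. (\<And>b. 0<b \<Longrightarrow> b\<le>1 \<Longrightarrow> R2 b \<le> t) \<Longrightarrow> R2 0 \<le> t"
    using g2 unfolding good_def by blast+
  show ?thesis unfolding good_def
  proof (intro conjI allI impI)
    fix a b :: real assume "0 \<le> a" "a \<le> b" "b \<le> 1"
    then show "L1 a + L2 a \<le> L1 b + L2 b" "R1 b + R2 b \<le> R1 a + R2 a"
      using m1[of a b] m2[of a b] by auto
  next
    show "L1 1 + L2 1 \<le> R1 1 + R2 1" using o1 o2 by simp
  next
    fix a t :: real assume a: "0 < a" "a \<le> 1" and h: "\<forall>b. 0 < b \<longrightarrow> b < a \<longrightarrow> L1 b + L2 b \<le> t"
    show "L1 a + L2 a \<le> t"
    proof (rule ccontr)
      assume nt: "\<not> ?thesis"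
      define e where "e = (L1 a + L2 a - t) / 2"
      have e0: "e > 0" using nt unfolding e_def by simp
      obtain b1 where b1: "0 < b1" "b1 < a" "L1 b1 > L1 a - e"
        using lc1[OF a, of "L1 a - e"] e0 by force
      obtain b2 where b2: "0 < b2" "b2 < a" "L2 b2 > L2 a - e"
        using lc2[OF a, of "L2 a - e"] e0 by force
      define b where "b = max b1 b2"
      have "L1 b1 \<le> L1 b" "L2 b2 \<le> L2 b" using m1[of b1 b] m2[of b2 b] b1 b2 a unfolding b_def by auto
      moreover have "L1 b + L2 b \<le> t" using h b1 b2 unfolding b_def by (auto simp: max_def)
      moreover have "2 * e = (2 * e)" by simp
      ultimately show False using b1 b2 e_def by (simp add: field_simps)
    qed
  next
    fix a t :: real assume a: "0 < a" "a \<le> 1" and h: "\<forall>b. 0 < b \<longrightarrow> b < a \<longrightarrow> t \<le> R1 b + R2 b"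
    show "t \<le> R1 a + R2 a"
    proof (rule ccontr)
      assume nt: "\<not> ?thesis"
      define e where "e = (t - R1 a - R2 a) / 2"
      have e0: "e > 0" using nt unfolding e_def by simp
      obtain b1 where b1: "0 < b1" "b1 < a" "R1 b1 < R1 a + e"
        using rc1[OF a, of "R1 a + e"] e0 by force
      obtain b2 where b2: "0 < b2" "b2 < a" "R2 b2 < R2 a + e"
        using rc2[OF a, of "R2 a + e"] e0 by force
      define b where "b = max b1 b2"
      have "R1 b \<le> R1 b1" "R2 b \<le> R2 b2" using m1[of b1 b] m2[of b2 b] b1 b2 a unfolding b_def by auto
      moreover have "t \<le> R1 b + R2 b" using h b1 b2 unfolding b_def by (auto simp: max_def)
      moreover have "2 * e = (2 * e)" by simp
      ultimately show False using b1 b2 e_def by (simp add: field_simps)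
    qed
  next
    fix t :: real assume h: "\<forall>b. 0 < b \<longrightarrow> b \<le> 1 \<longrightarrow> t \<le> L1 b + L2 b"
    show "t \<le> L1 0 + L2 0"
    proof (rule ccontr)
      assume nt: "\<not> ?thesis"
      define e where "e = (t - L1 0 - L2 0) / 2"
      have e0: "e > 0" using nt unfolding e_def by simp
      obtain b1 where b1: "0 < b1" "b1 \<le> 1" "L1 b1 < L1 0 + e"
        using lc01[of "L1 0 + e"] e0 by force
      obtain b2 where b2: "0 < b2" "b2 \<le> 1" "L2 b2 < L2 0 + e"
        using lc02[of "L2 0 + e"] e0 by force
      define b where "b = min b1 b2"
      have "L1 b \<le> L1 b1" "L2 b \<le> L2 b2" using m1[of b b1] m2[of b b2] b1 b2 unfolding b_def by auto
      moreover have "t \<le> L1 b + L2 b" using h b1 b2 unfolding b_def by (auto simp: min_def)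
      moreover have "2 * e = (2 * e)" by simp
      ultimately show False using b1 b2 e_def by (simp add: field_simps)
    qed
  next
    fix t :: real assume h: "\<forall>b. 0 < b \<longrightarrow> b \<le> 1 \<longrightarrow> R1 b + R2 b \<le> t"
    show "R1 0 + R2 0 \<le> t"
    proof (rule ccontr)
      assume nt: "\<not> ?thesis"
      define e where "e = (R1 0 + R2 0 - t) / 2"
      have e0: "e > 0" using nt unfolding e_def by simp
      obtain b1 where b1: "0 < b1" "b1 \<le> 1" "R1 b1 > R1 0 - e"
        using rc01[of "R1 0 - e"] e0 by force
      obtain b2 where b2: "0 < b2" "b2 \<le> 1" "R2 b2 > R2 0 - e"
        using rc02[of "R2 0 - e"] e0 by force
      define b where "b = min b1 b2"
      have "R1 b1 \<le> R1 b" "R2 b2 \<le> R2 b" using m1[of b b1] m2[of b b2] b1 b2 unfolding b_def by auto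
      moreover have "R1 b + R2 b \<le> t" using h b1 b2 unfolding b_def by (auto simp: min_def)
      moreover have "2 * e = (2 * e)" by simp
      ultimately show False using b1 b2 e_def by (simp add: field_simps)
    qed
  qed
qed

lemma good_scale:
  assumes g: "good L R" and k: "0 \<le> k"
  shows "good (\<lambda>a. k * L a) (\<lambda>a. k * R a)"
proof (cases "k = 0")
  case True
  show ?thesis unfolding True good_def
  proof (intro conjI allI impI)
    fix a t :: real assume a: "0 < a" "a \<le> 1" and h: "\<forall>b. 0 < b \<longrightarrow> b < a \<longrightarrow> 0 * L b \<le> t"
    show "0 * L a \<le> t" using h[rule_format, of "a/2"] a by simp
  next
    fix a t :: real assume a: "0 < a" "a \<le> 1" and h: "\<forall>b. 0 < b \<longrightarrow> b < a \<longrightarrow> t \<le> 0 * R b"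
    show "t \<le> 0 * R a" using h[rule_format, of "a/2"] a by simp
  next
    fix t :: real assume h: "\<forall>b. 0 < b \<longrightarrow> b \<le> 1 \<longrightarrow> t \<le> 0 * L b"
    show "t \<le> 0 * L 0" using h[rule_format, of 1] by simp
  next
    fix t :: real assume h: "\<forall>b. 0 < b \<longrightarrow> b \<le> 1 \<longrightarrow> 0 * R b \<le> t"
    show "0 * R 0 \<le> t" using h[rule_format, of 1] by simp
  qed auto
next
  case False
  then have kp: "k > 0" using k by simp
  have m: "\<And>a b. 0 \<le> a \<Longrightarrow> a \<le> b \<Longrightarrow> b \<le> 1 \<Longrightarrow> L a \<le> L b \<and> R b \<le> R a"
    and o: "L 1 \<le> R 1"
    and lc: "\<And>a t. 0 < a \<Longrightarrow> a \<le> 1 \<Longrightarrow> (\<And>b. 0<b \<Longrightarrow> b<a \<Longrightarrow> L b \<le> t) \<Longrightarrow> L a \<le> t"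
    and rc: "\<And>a t. 0 < a \<Longrightarrow> a \<le> 1 \<Longrightarrow> (\<And>b. 0<b \<Longrightarrow> b<a \<Longrightarrow> t \<le> R b) \<Longrightarrow> t \<le> R a"
    and lc0: "\<And>t. (\<And>b. 0<b \<Longrightarrow> b\<le>1 \<Longrightarrow> t \<le> L b) \<Longrightarrow> t \<le> L 0"
    and rc0: "\<And>t. (\<And>b. 0<b \<Longrightarrow> b\<le>1 \<Longrightarrow> R b \<le> t) \<Longrightarrow> R 0 \<le> t"
    using g unfolding good_def by blast+
  show ?thesis unfolding good_def
  proof (intro conjI allI impI)
    fix a b :: real assume "0 \<le> a" "a \<le> b" "b \<le> 1"
    then show "k * L a \<le> k * L b" "k * R b \<le> k * R a" using m[of a b] k by (auto intro: mult_left_mono)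
  next
    show "k * L 1 \<le> k * R 1" using o k by (auto intro: mult_left_mono)
  next
    fix a t :: real assume a: "0 < a" "a \<le> 1" and h: "\<forall>b. 0 < b \<longrightarrow> b < a \<longrightarrow> k * L b \<le> t"
    have "L a \<le> t / k" using lc[OF a, of "t/k"] h kp by (auto simp: field_simps)
    then show "k * L a \<le> t" using kp by (auto simp: field_simps)
  next
    fix a t :: real assume a: "0 < a" "a \<le> 1" and h: "\<forall>b. 0 < b \<longrightarrow> b < a \<longrightarrow> t \<le> k * R b"
    have "t / k \<le> R a" using rc[OF a, of "t/k"] h kp by (auto simp: field_simps)
    then show "t \<le> k * R a" using kp by (auto simp: field_simps)
  next
    fix t :: real assume h: "\<forall>b. 0 < b \<longrightarrow> b \<le> 1 \<longrightarrow> t \<le> k * L b"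
    have "t / k \<le> L 0" using lc0[of "t/k"] h kp by (auto simp: field_simps)
    then show "t \<le> k * L 0" using kp by (auto simp: field_simps)
  next
    fix t :: real assume h: "\<forall>b. 0 < b \<longrightarrow> b \<le> 1 \<longrightarrow> k * R b \<le> t"
    have "R 0 \<le> t / k" using rc0[of "t/k"] h kp by (auto simp: field_simps)
    then show "k * R 0 \<le> t" using kp by (auto simp: field_simps)
  qed
qed

abbreviation G :: "(real \<Rightarrow> real) \<Rightarrow> bool" where "G u \<equiv> good (lower u) (upper u)"

lemma fadd_props:
  assumes "G u" "G v"
  shows "G (fadd u v) \<and> (\<forall>a. 0 \<le> a \<longrightarrow> a \<le> 1 \<longrightarrow>
     lower (fadd u v) a = lower u a + lower v a \<and> upper (fadd u v) a = upper u a + upper v a)"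
proof -
  have g: "good (\<lambda>a. lower u a + lower v a) (\<lambda>a. upper u a + upper v a)"
    by (rule good_add[OF assms])
  have e: "\<And>a. 0 \<le> a \<Longrightarrow> a \<le> 1 \<Longrightarrow>
     lower (fadd u v) a = lower u a + lower v a \<and> upper (fadd u v) a = upper u a + upper v a"
    unfolding fadd_def using fol_lower_upper[OF g] by simp
  show ?thesis using good_cong[OF g e] e by blast
qed

lemma fscale_props:
  assumes "G u" "0 \<le> k"
  shows "G (fscale k u) \<and> (\<forall>a. 0 \<le> a \<longrightarrow> a \<le> 1 \<longrightarrow>
     lower (fscale k u) a = k * lower u a \<and> upper (fscale k u) a = k * upper u a)"
proof -
  have g: "good (\<lambda>a. k * lower u a) (\<lambda>a. k * upper u a)"
    by (rule good_scale[OF assms])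
  have g': "good (\<lambda>a. min (k * lower u a) (k * upper u a)) (\<lambda>a. max (k * lower u a) (k * upper u a))"
  proof (rule good_cong[OF g])
    fix a :: real assume "0 \<le> a" "a \<le> 1"
    then have "k * lower u a \<le> k * upper u a" using good_LR[OF assms(1)] assms(2) mult_left_mono by blast
    then show "min (k * lower u a) (k * upper u a) = k * lower u a \<and> max (k * lower u a) (k * upper u a) = k * upper u a"
      by simp
  qed
  have e: "\<And>a. 0 \<le> a \<Longrightarrow> a \<le> 1 \<Longrightarrow>
     lower (fscale k u) a = k * lower u a \<and> upper (fscale k u) a = k * upper u a"
  proof -
    fix a :: real assume a: "0 \<le> a" "a \<le> 1"
    then have "k * lower u a \<le> k * upper u a" using good_LR[OF assms(1)] assms(2) mult_left_mono by blast
    then show "lower (fscale k u) a = k * lower u a \<and> upper (fscale k u) a = k * upper u a"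
      unfolding fscale_def using fol_lower_upper[OF g' a] by simp
  qed
  show ?thesis using good_cong[OF g e] e by blast
qed

lemma fsum_props:
  assumes "\<And>i. G (f i)"
  shows "G (fsum f n) \<and> (\<forall>a. 0 \<le> a \<longrightarrow> a \<le> 1 \<longrightarrow>
     lower (fsum f n) a = (\<Sum>i\<le>n. lower (f i) a) \<and> upper (fsum f n) a = (\<Sum>i\<le>n. upper (f i) a))"
proof (induction n)
  case 0
  then show ?case using assms by simp
next
  case (Suc n)
  then show ?case using fadd_props[of "fsum f n" "f (Suc n)"] assms by simp
qed

lemma poly_geom_zero:
  fixes r :: real assumes "0 < r" "r < 1"
  shows "(\<lambda>n. real n ^ k * r ^ n) \<longlonglongrightarrow> 0"
  using assms by real_asymp

lemma good_abs_bound: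
  assumes "good L R" "0 \<le> a" "a \<le> 1"
  shows "\<bar>L a\<bar> \<le> \<bar>L 0\<bar> + \<bar>R 0\<bar> \<and> \<bar>R a\<bar> \<le> \<bar>L 0\<bar> + \<bar>R 0\<bar>"
  using good_LR[OF assms] by auto

lemma fdist_bound:
  assumes "G x" "G y" "0 \<le> a" "a \<le> 1"
  shows "\<bar>lower x a - lower y a\<bar> \<le> fdist x y \<and> \<bar>upper x a - upper y a\<bar> \<le> fdist x y"
proof -
  define B where "B = (\<bar>lower x 0\<bar> + \<bar>upper x 0\<bar>) + (\<bar>lower y 0\<bar> + \<bar>upper y 0\<bar>)"
  have "bdd_above ((\<lambda>a. max \<bar>lower x a - lower y a\<bar> \<bar>upper x a - upper y a\<bar>) ` {0..1})"
  proof (rule bdd_aboveI2)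
    fix b :: real assume "b \<in> {0..1}"
    then have "0 \<le> b" "b \<le> 1" by auto
    then show "max \<bar>lower x b - lower y b\<bar> \<bar>upper x b - upper y b\<bar> \<le> B"
      using good_abs_bound[OF assms(1), of b] good_abs_bound[OF assms(2), of b]
        abs_triangle_ineq4[of "lower x b" "lower y b"] abs_triangle_ineq4[of "upper x b" "upper y b"]
      unfolding B_def by (intro max.boundedI) linarith+
  qed
  from cSUP_upper[OF _ this, of a] assms(3,4) show ?thesis unfolding fdist_def by auto
qed

lemma fdist_le:
  assumes "\<And>a. 0 \<le> a \<Longrightarrow> a \<le> 1 \<Longrightarrow> \<bar>lower x a - lower y a\<bar> \<le> B \<and> \<bar>upper x a - upper y a\<bar> \<le> B"
  shows "fdist x y \<le> B"
  unfolding fdist_def by (rule cSUP_least) (use assms in auto)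

lemma euler_toeplitz:
  fixes p :: real and d :: "nat \<Rightarrow> real"
  assumes p: "p > 0" and d0: "\<And>k. 0 \<le> d k" and dl: "d \<longlonglongrightarrow> 0"
  shows "(\<lambda>n. \<Sum>k\<le>n. real (n choose k) * p ^ (n - k) / (p + 1) ^ n * d k) \<longlonglongrightarrow> 0"
proof -
  define w where "w n k = real (n choose k) * p ^ (n - k) / (p + 1) ^ n" for n k
  have w0: "0 \<le> w n k" for n k unfolding w_def using p by simp
  have ws: "(\<Sum>k\<le>n. w n k) = 1" for n
  proof -
    have bin: "(p + 1) ^ n = (\<Sum>k\<le>n. real (n choose k) * p ^ (n - k))"
      using binomial_ring[of 1 p n] by (simp add: add.commute)
    have "(\<Sum>k\<le>n. w n k) = (\<Sum>k\<le>n. real (n choose k) * p ^ (n - k)) / (p + 1) ^ n"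
      unfolding w_def by (simp add: sum_divide_distrib)
    also have "\<dots> = 1" unfolding bin[symmetric] using p by (simp add: add_pos_nonneg)
    finally show ?thesis .
  qed
  have wl: "(\<lambda>n. w n k) \<longlonglongrightarrow> 0" for k
  proof (rule tendsto_sandwich[of "\<lambda>n. 0" _ _ "\<lambda>n. real n ^ k * (p / (p + 1)) ^ n / p ^ k"])
    show "\<forall>\<^sub>F n in sequentially. 0 \<le> w n k" using w0 by simp
    show "\<forall>\<^sub>F n in sequentially. w n k \<le> real n ^ k * (p / (p + 1)) ^ n / p ^ k"
      using eventually_ge_at_top[of k]
    proof eventually_elim
      case (elim n)
      have c: "real (n choose k) \<le> real n ^ k" using binomial_le_pow[OF elim]
        by (metis of_nat_le_iff of_nat_power)
      have pe: "p ^ (n - k) = p ^ n / p ^ k" using p elim by (simp add: power_diff)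
      have "w n k = real (n choose k) * ((p / (p + 1)) ^ n / p ^ k)"
        unfolding w_def pe using p by (simp add: power_divide)
      also have "\<dots> \<le> real n ^ k * ((p / (p + 1)) ^ n / p ^ k)"
        by (rule mult_right_mono[OF c]) (use p in simp)
      finally show ?case by simp
    qed
    show "(\<lambda>n. 0) \<longlonglongrightarrow> (0::real)" by simp
    have "(\<lambda>n. real n ^ k * (p / (p + 1)) ^ n) \<longlonglongrightarrow> 0"
      by (rule poly_geom_zero) (use p in auto)
    then show "(\<lambda>n. real n ^ k * (p / (p + 1)) ^ n / p ^ k) \<longlonglongrightarrow> 0"
      using tendsto_divide_zero by blast
  qed
  have "(\<lambda>n. \<Sum>k\<le>n. w n k * d k) \<longlonglongrightarrow> 0"
  proof (rule LIMSEQ_I)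
    fix r :: real assume r: "0 < r"
    then have "r / 2 > 0" by simp
    from LIMSEQ_D[OF dl this] obtain N where N: "\<And>k. k \<ge> N \<Longrightarrow> \<bar>d k\<bar> < r / 2" by auto
    have F: "(\<lambda>n. \<Sum>k<N. w n k * d k) \<longlonglongrightarrow> 0"
      by (rule tendsto_null_sum) (auto intro: tendsto_mult_left_zero wl)
    from LIMSEQ_D[OF F \<open>r/2 > 0\<close>] obtain M where M: "\<And>n. n \<ge> M \<Longrightarrow> norm (\<Sum>k<N. w n k * d k) < r / 2" by auto
    show "\<exists>no. \<forall>n\<ge>no. norm ((\<Sum>k\<le>n. w n k * d k) - 0) < r"
    proof (intro exI allI impI)
      fix n assume n: "n \<ge> M"
      have "(\<Sum>k\<le>n. w n k * d k) \<le> (\<Sum>k\<le>n. w n k * (if k < N then d k else 0) + w n k * (r / 2))"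
      proof (rule sum_mono)
        fix k assume "k \<in> {..n}"
        have "d k \<le> (if k < N then d k else 0) + r / 2" using N[of k] d0[of k] r by auto
        then show "w n k * d k \<le> w n k * (if k < N then d k else 0) + w n k * (r / 2)"
          using mult_left_mono[OF \<open>d k \<le> _\<close> w0[of n k]]
            distrib_left[of "w n k" "if k < N then d k else 0" "r/2"] by linarith
      qed
      also have "\<dots> = (\<Sum>k\<le>n. w n k * (if k < N then d k else 0)) + r / 2"
      proof -
        have "(\<Sum>k\<le>n. w n k * (r / 2)) = (\<Sum>k\<le>n. w n k) * (r / 2)" by (rule sum_distrib_right[symmetric])
        then have "(\<Sum>k\<le>n. w n k * (r / 2)) = r / 2" using ws[of n] by simp
        then show ?thesis by (simp only: sum.distrib)
      qed
      also have "(\<Sum>k\<le>n. w n k * (if k < N then d k else 0)) = (\<Sum>k\<in>{..n} \<inter> {..<N}. w n k * d k)"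
      proof -
        have "(\<lambda>k. w n k * (if k < N then d k else 0)) = (\<lambda>k. if k \<in> {..<N} then w n k * d k else 0)"
          by auto
        then show ?thesis by (simp only:) (rule sum.inter_restrict[symmetric], simp)
      qed
      also have "\<dots> \<le> (\<Sum>k<N. w n k * d k)"
        by (rule sum_mono2) (use w0 d0 in auto)
      also have "\<dots> < r / 2" using M[OF n] by auto
      finally have up: "(\<Sum>k\<le>n. w n k * d k) < r" by simp
      have "0 \<le> (\<Sum>k\<le>n. w n k * d k)" using w0 d0 by (simp add: sum_nonneg)
      then show "norm ((\<Sum>k\<le>n. w n k * d k) - 0) < r" using up by simp
    qed
  qed
  then show ?thesis unfolding w_def by simp
qed

lemma euler_weights:
  fixes p :: real assumes p: "p > 0"
  shows "(\<Sum>k\<le>n. real (n choose k) * p ^ (n - k) / (p + 1) ^ n) = 1"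
proof -
  have bin: "(p + 1) ^ n = (\<Sum>k\<le>n. real (n choose k) * p ^ (n - k))"
    using binomial_ring[of 1 p n] by (simp add: add.commute)
  have "(\<Sum>k\<le>n. real (n choose k) * p ^ (n - k) / (p + 1) ^ n) = (\<Sum>k\<le>n. real (n choose k) * p ^ (n - k)) / (p + 1) ^ n"
    by (simp add: sum_divide_distrib)
  also have "\<dots> = 1" unfolding bin[symmetric] using p by (simp add: add_pos_nonneg)
  finally show ?thesis .
qed

lemma wsum_bound:
  fixes w X d :: "nat \<Rightarrow> real"
  assumes "(\<Sum>k\<le>n. w k) = 1" "\<And>k. 0 \<le> w k" "\<And>k. \<bar>X k - Y\<bar> \<le> d k"
  shows "\<bar>(\<Sum>k\<le>n. w k * X k) - Y\<bar> \<le> (\<Sum>k\<le>n. w k * d k)"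
proof -
  have "Y = (\<Sum>k\<le>n. w k * Y)" using assms(1) by (simp add: sum_distrib_right[symmetric])
  then have "(\<Sum>k\<le>n. w k * X k) - Y = (\<Sum>k\<le>n. w k * (X k - Y))"
    by (simp add: sum_subtractf right_diff_distrib)
  also have "\<bar>\<dots>\<bar> \<le> (\<Sum>k\<le>n. \<bar>w k * (X k - Y)\<bar>)" by (rule sum_abs)
  also have "\<dots> \<le> (\<Sum>k\<le>n. w k * d k)"
  proof (rule sum_mono)
    fix k
    have "\<bar>w k * (X k - Y)\<bar> = w k * \<bar>X k - Y\<bar>" using assms(2)[of k] by (simp add: abs_mult)
    also have "\<dots> \<le> w k * d k" by (rule mult_left_mono[OF assms(3) assms(2)])
    finally show "\<bar>w k * (X k - Y)\<bar> \<le> w k * d k" .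
  qed
  finally show ?thesis .
qed

theorem mainTheorem4:
  fixes p :: real and u :: "nat \<Rightarrow> real \<Rightarrow> real" and \<nu> :: "real \<Rightarrow> real"
  assumes "p > 0"
    and "\<And>n. fuzzy_number (u n)"
    and "fuzzy_number \<nu>"
    and "(\<lambda>n. fdist (fsum u n) \<nu>) \<longlonglongrightarrow> 0"
  shows "(\<lambda>n. fdist (euler_mean p u n) \<nu>) \<longlonglongrightarrow> 0"
proof -
  have p: "p > 0" by fact
  have Gu: "G (u n)" for n using fuzzy_good[OF assms(2)] .
  have Gv: "G \<nu>" using fuzzy_good[OF assms(3)] .
  define s where "s k = fsum u k" for k
  have Gs: "G (s k)" for k unfolding s_def using fsum_props[of u k] Gu by blast
  define d where "d k = fdist (s k) \<nu>" for k
  have d0: "0 \<le> d k" for k unfolding d_def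
    using order_trans[OF abs_ge_zero conjunct1[OF fdist_bound[OF Gs[of k] Gv, of 0]]] by simp
  have dl: "d \<longlonglongrightarrow> 0" unfolding d_def s_def using assms(4) .
  define w where "w n k = real (n choose k) * p ^ (n - k) / (p + 1) ^ n" for n k
  have w0: "0 \<le> w n k" for n k unfolding w_def using p by simp
  have ws: "(\<Sum>k\<le>n. w n k) = 1" for n unfolding w_def using euler_weights[OF p] .
  have bound: "fdist (euler_mean p u n) \<nu> \<le> (\<Sum>k\<le>n. w n k * d k)" for n
  proof -
    define c where "c k = real (n choose k) * p ^ (n - k)" for k
    have c0: "0 \<le> c k" for k unfolding c_def using p by simp
    define f where "f k = fscale (c k) (s k)" for k
    have fp: "G (f k) \<and> (\<forall>a. 0 \<le> a \<longrightarrow> a \<le> 1 \<longrightarrow>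
       lower (f k) a = c k * lower (s k) a \<and> upper (f k) a = c k * upper (s k) a)" for k
      unfolding f_def by (rule fscale_props[OF Gs c0])
    have Sp: "G (fsum f n) \<and> (\<forall>a. 0 \<le> a \<longrightarrow> a \<le> 1 \<longrightarrow>
       lower (fsum f n) a = (\<Sum>i\<le>n. lower (f i) a) \<and> upper (fsum f n) a = (\<Sum>i\<le>n. upper (f i) a))"
      by (rule fsum_props) (use fp in blast)
    have q0: "0 \<le> 1 / (p + 1) ^ n" using p by simp
    have E: "euler_mean p u n = fscale (1 / (p + 1) ^ n) (fsum f n)"
      unfolding euler_mean_def f_def c_def s_def ..
    have Ep: "lower (euler_mean p u n) a = 1 / (p + 1) ^ n * lower (fsum f n) a \<and>
              upper (euler_mean p u n) a = 1 / (p + 1) ^ n * upper (fsum f n) a"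
      if "0 \<le> a" "a \<le> 1" for a
      unfolding E using fscale_props[OF conjunct1[OF Sp] q0] that by blast
    show ?thesis
    proof (rule fdist_le)
      fix a :: real assume a: "0 \<le> a" "a \<le> 1"
      have "lower (euler_mean p u n) a = (\<Sum>k\<le>n. w n k * lower (s k) a)"
        using Ep[OF a] Sp fp a unfolding w_def c_def
        by (simp add: sum_distrib_left field_simps)
      moreover have "upper (euler_mean p u n) a = (\<Sum>k\<le>n. w n k * upper (s k) a)"
        using Ep[OF a] Sp fp a unfolding w_def c_def
        by (simp add: sum_distrib_left field_simps)
      moreover have "\<bar>(\<Sum>k\<le>n. w n k * lower (s k) a) - lower \<nu> a\<bar> \<le> (\<Sum>k\<le>n. w n k * d k)"
        by (rule wsum_bound[OF ws w0]) (use fdist_bound[OF Gs Gv a] in \<open>simp add: d_def\<close>)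
      moreover have "\<bar>(\<Sum>k\<le>n. w n k * upper (s k) a) - upper \<nu> a\<bar> \<le> (\<Sum>k\<le>n. w n k * d k)"
        by (rule wsum_bound[OF ws w0]) (use fdist_bound[OF Gs Gv a] in \<open>simp add: d_def\<close>)
      ultimately show "\<bar>lower (euler_mean p u n) a - lower \<nu> a\<bar> \<le> (\<Sum>k\<le>n. w n k * d k) \<and>
            \<bar>upper (euler_mean p u n) a - upper \<nu> a\<bar> \<le> (\<Sum>k\<le>n. w n k * d k)" by simp
    qed
  qed
  have nonneg: "0 \<le> fdist (euler_mean p u n) \<nu>" for n
  proof -
    have Gs': "G (fsum u k)" for k using Gs unfolding s_def .
    have c0: "0 \<le> real (n choose k) * p ^ (n - k)" for k using p by simp
    have g1: "G (fscale (real (n choose k) * p ^ (n - k)) (fsum u k))" for k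
      using fscale_props[OF Gs' c0] by blast
    have g2: "G (fsum (\<lambda>k. fscale (real (n choose k) * p ^ (n - k)) (fsum u k)) n)"
      using fsum_props[of "\<lambda>k. fscale (real (n choose k) * p ^ (n - k)) (fsum u k)" n] g1 by blast
    have q0: "0 \<le> 1 / (p + 1) ^ n" using p by simp
    have "G (euler_mean p u n)"
      unfolding euler_mean_def using fscale_props[OF g2 q0] by blast
    then show ?thesis using fdist_bound[OF _ Gv, of _ 0] by fastforce
  qed
  have el: "(\<lambda>n. \<Sum>k\<le>n. w n k * d k) \<longlonglongrightarrow> 0"
    unfolding w_def by (rule euler_toeplitz[OF p d0 dl])
  show ?thesis
    by (rule tendsto_sandwich[of "\<lambda>n. 0" _ _ "\<lambda>n. \<Sum>k\<le>n. w n k * d k"])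
       (use nonneg bound el in auto)
qed

end
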